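(* Let $\gamma_1,\gamma_2>0$ and consider the birth-death chain RDS $(\theta,\varphi)$ described in the context, with $W_0=\{0,2,4,\dots\}$ and $W_1=\{1,3,5,\dots\}$. For each $x\in\mathbb{N}_0$ the limit \[ a_x(q):=\lim_{n\to\infty}\varphi^{2n}_{\theta^{-2n}q}(x) \] exists $\mathbb{P}$-a.s. Moreover, if $x,y\in W_i$ for some $i\in\{0,1\}$ then $a_x=a_y$ $\mathbb{P}$-a.s., and if $x\in W_0$, $y\in W_1$ then $a_x\neq a_y$ $\mathbb{P}$-a.s.
   Context: Noise space $\mathcal{Q}=\{q=(q_n)_{n\in\mathbb{Z}}: q_n\in[0,1]\}$ with product Borel $\sigma$-algebra and $\mathbb{P}=\lambda^{\mathbb{Z}}$ ($\lambda$ Lebesgue on $[0,1]$), invertible shift $(\theta q)_n=q_{n+1}$. For $q\in\mathcal{Q}$, $f_q(x)=x+1$ if $q_0<\frac{\gamma_1}{\gamma_1+\gamma_2x}$ and $f_q(x)=x-1$ otherwise; $\varphi^0_q=\mathrm{id}$, $\varphi^n_q=f_{\theta^{n-1}q}\circ\cdots\circ f_q$. *)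

theory Defs
  imports "HOL-Probability.Probability"
begin

type_synonym noise = "int \<Rightarrow> real"

definition noiseP :: "noise measure" where
  "noiseP = PiM (UNIV :: int set) (\<lambda>_. uniform_measure lborel {0..1::real})"

definition shiftZ :: "int \<Rightarrow> noise \<Rightarrow> noise" where
  "shiftZ m q = (\<lambda>n. q (n + m))"

definition theta :: "noise \<Rightarrow> noise" where
  "theta q = shiftZ 1 q"

definition fstep :: "real \<Rightarrow> real \<Rightarrow> noise \<Rightarrow> int \<Rightarrow> int" where
  "fstep g1 g2 q x = (if q 0 < g1 / (g1 + g2 * real_of_int x) then x + 1 else x - 1)"

fun phi :: "real \<Rightarrow> real \<Rightarrow> nat \<Rightarrow> noise \<Rightarrow> int \<Rightarrow> int" where
  "phi g1 g2 0 q x = x"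
| "phi g1 g2 (Suc n) q x = fstep g1 g2 ((theta ^^ n) q) (phi g1 g2 n q x)"

definition pullback :: "real \<Rightarrow> real \<Rightarrow> nat \<Rightarrow> noise \<Rightarrow> nat \<Rightarrow> int" where
  "pullback g1 g2 x q n = phi g1 g2 (2 * n) (shiftZ (- 2 * int n) q) (int x)"

definition a_lim :: "real \<Rightarrow> real \<Rightarrow> nat \<Rightarrow> noise \<Rightarrow> int" where
  "a_lim g1 g2 x q = lim (pullback g1 g2 x q)"

end

theory Submission
  imports Defs
begin

definition stp :: "real \<Rightarrow> real \<Rightarrow> real \<Rightarrow> int \<Rightarrow> int" where
  "stp g1 g2 t x = (if t < g1 / (g1 + g2 * real_of_int x) then x + 1 else x - 1)"

fun fw :: "real \<Rightarrow> real \<Rightarrow> nat \<Rightarrow> (nat \<Rightarrow> real) \<Rightarrow> int \<Rightarrow> int" where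
  "fw g1 g2 0 w x = x"
| "fw g1 g2 (Suc k) w x = stp g1 g2 (w k) (fw g1 g2 k w x)"

lemma theta_pow: "(theta ^^ n) q = (\<lambda>m. q (m + int n))"
  by (induction n) (auto simp: theta_def shiftZ_def add.assoc)

lemma phi_fw: "phi g1 g2 k (shiftZ s q) x = fw g1 g2 k (\<lambda>i. q (int i + s)) x"
  by (induction k) (auto simp: theta_pow fstep_def stp_def shiftZ_def add.commute)

lemma fw_Suc_left: "fw g1 g2 (Suc k) w x = fw g1 g2 k (\<lambda>n. w (Suc n)) (stp g1 g2 (w 0) x)"
  by (induction k arbitrary: x) auto

lemma fw_add: "fw g1 g2 (a + b) w x = fw g1 g2 b (\<lambda>i. w (i + a)) (fw g1 g2 a w x)"
  by (induction b) (auto simp: add.commute)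

lemma fw_parity: "fw g1 g2 j w x mod 2 = (x + int j) mod 2"
proof (induction j)
  case (Suc j)
  then show ?case by (auto simp: stp_def) presburger+
qed simp

lemma stp_nonneg:
  assumes "g1 > 0" "g2 > 0" "t < 1" "z \<ge> 0"
  shows "stp g1 g2 t z \<ge> 0"
proof (cases "z = 0")
  case True
  then show ?thesis using assms by (auto simp: stp_def)
qed (use assms in \<open>auto simp: stp_def\<close>)

lemma fw_nonneg:
  assumes "g1 > 0" "g2 > 0" "\<And>i. w i < 1" "x \<ge> 0"
  shows "fw g1 g2 j w x \<ge> 0"
  using assms by (induction j) (auto intro!: stp_nonneg)

lemma fw_mono:
  assumes "g1 > 0" "g2 > 0" "\<And>i. w i < 1" "0 \<le> x" "x \<le> y" "even (y - x)"
  shows "fw g1 g2 j w x \<le> fw g1 g2 j w y"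
proof (induction j)
  case (Suc j)
  let ?a = "fw g1 g2 j w x" and ?b = "fw g1 g2 j w y"
  have pa: "?a mod 2 = (x + int j) mod 2" "?b mod 2 = (y + int j) mod 2" by (rule fw_parity)+
  have "even (?b - ?a)" using pa assms(6) by presburger
  then have "?a = ?b \<or> ?a + 2 \<le> ?b" using Suc by presburger
  then show ?case
  proof
    assume "?a + 2 \<le> ?b" then show ?thesis by (auto simp: stp_def)
  qed simp
qed (use assms in simp)

lemma fw_merge:
  assumes "fw g1 g2 j w x = fw g1 g2 j w y" "j \<le> J"
  shows "fw g1 g2 J w x = fw g1 g2 J w y"
  using assms(2)
proof (induction J)
  case 0 then show ?case using assms(1) by simp
next
  case (Suc J)
  then show ?case using assms(1) by (cases "j = Suc J") auto
qed

lemma fw_hit: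
  assumes "g1 > 0" "g2 > 0" "\<And>i. w i < 1" "0 \<le> b" "b \<le> z" "even (z - b)"
    and "fw g1 g2 j w z = 0" "j \<le> J"
  shows "fw g1 g2 J w z = fw g1 g2 J w b"
proof -
  have "fw g1 g2 j w b \<le> 0" using fw_mono[of g1 g2 w b z j] assms by simp
  moreover have "fw g1 g2 j w b \<ge> 0" using fw_nonneg[of g1 g2 w b j] assms by simp
  ultimately have "fw g1 g2 j w z = fw g1 g2 j w b" using assms(7) by simp
  then show ?thesis using fw_merge assms(8) by blast
qed

lemma fw_two:
  assumes "g1 > 0" "g2 > 0" "\<And>i. w i < 1" "b = 0 \<or> b = 1"
  shows "fw g1 g2 2 w b = b \<or> fw g1 g2 2 w b = b + 2"
proof -
  have n: "fw g1 g2 1 w b \<ge> 0" by (rule fw_nonneg) (use assms in auto)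
  have "fw g1 g2 1 w b = stp g1 g2 (w 0) b" by simp
  then have "fw g1 g2 1 w b = 1 - b \<or> fw g1 g2 1 w b = b + 1" using assms(4) n
    by (auto simp: stp_def split: if_splits)
  moreover have "fw g1 g2 2 w b = stp g1 g2 (w 1) (fw g1 g2 1 w b)"
    by (simp add: numeral_2_eq_2)
  moreover have "fw g1 g2 2 w b \<ge> 0" by (rule fw_nonneg) (use assms in auto)
  ultimately show ?thesis using assms(4) by (auto simp: stp_def split: if_splits)
qed


abbreviation UU :: "real measure" where "UU \<equiv> uniform_measure lborel {0..1::real}"

definition NN :: "(nat \<Rightarrow> real) measure" where
  "NN = PiM (UNIV :: nat set) (\<lambda>_. UU)"

lemma probU: "prob_space UU"
  by (rule prob_space_uniform_measure) auto

lemma seqU: "sequence_space UU"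
  unfolding sequence_space_def product_prob_space_def product_sigma_finite_def
    product_prob_space_axioms_def
  using probU by (auto simp: prob_space_imp_sigma_finite)

lemma probNN: "prob_space NN"
proof -
  interpret sequence_space UU by (rule seqU)
  show ?thesis unfolding NN_def by unfold_locales
qed

lemma space_NN[simp]: "space NN = UNIV"
  by (auto simp: NN_def space_PiM)

lemma sets_UU[simp]: "sets UU = sets lborel" by simp

lemma NN_split:
  assumes A: "A \<in> sets lborel" and B: "B \<in> sets NN"
  shows "emeasure NN {w. w 0 \<in> A \<and> (\<lambda>n. w (Suc n)) \<in> B} = emeasure UU A * emeasure NN B"
proof -
  interpret S: sequence_space UU by (rule seqU)
  interpret PN: prob_space NN by (rule probNN)
  have D: "distr (UU \<Otimes>\<^sub>M NN) NN (\<lambda>(s, w). case_nat s w) = NN"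
    using S.PiM_iter unfolding NN_def .
  have meas: "(\<lambda>(s, w). case_nat s w) \<in> measurable (UU \<Otimes>\<^sub>M NN) NN"
    unfolding NN_def by measurable
  have set: "{w. w 0 \<in> A \<and> (\<lambda>n. w (Suc n)) \<in> B} \<in> sets NN"
  proof -
    have m1: "(\<lambda>w. w 0) \<in> measurable NN lborel"
      unfolding NN_def by (simp add: measurable_component_singleton cong: measurable_cong_sets)
    have m2: "(\<lambda>w. (\<lambda>n. w (Suc n))) \<in> measurable NN NN"
      unfolding NN_def
      by (rule measurable_PiM_single'[where f="\<lambda>n w. w (Suc n)"]) (auto simp: space_PiM)
    have "{w. w 0 \<in> A \<and> (\<lambda>n. w (Suc n)) \<in> B} = ((\<lambda>w. w 0) -` A \<inter> space NN) \<inter> ((\<lambda>w. (\<lambda>n. w (Suc n))) -` B \<inter> space NN)"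
      by auto
    also have "\<dots> \<in> sets NN" using m1 m2 A B by (intro sets.Int measurable_sets) auto
    finally show ?thesis .
  qed
  have "emeasure NN {w. w 0 \<in> A \<and> (\<lambda>n. w (Suc n)) \<in> B}
      = emeasure (distr (UU \<Otimes>\<^sub>M NN) NN (\<lambda>(s, w). case_nat s w)) {w. w 0 \<in> A \<and> (\<lambda>n. w (Suc n)) \<in> B}"
    by (simp add: D)
  also have "\<dots> = emeasure (UU \<Otimes>\<^sub>M NN) ((\<lambda>(s, w). case_nat s w) -` {w. w 0 \<in> A \<and> (\<lambda>n. w (Suc n)) \<in> B} \<inter> space (UU \<Otimes>\<^sub>M NN))"
    by (rule emeasure_distr[OF meas set])
  also have "(\<lambda>(s, w). case_nat s w) -` {w. w 0 \<in> A \<and> (\<lambda>n. w (Suc n)) \<in> B} \<inter> space (UU \<Otimes>\<^sub>M NN) = A \<times> B"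
    by (auto simp: space_pair_measure)
  also have "emeasure (UU \<Otimes>\<^sub>M NN) (A \<times> B) = emeasure UU A * emeasure NN B"
    using A B by (intro PN.emeasure_pair_measure_Times) auto
  finally show ?thesis .
qed


definition CC :: "real \<Rightarrow> real \<Rightarrow> nat \<Rightarrow> int \<Rightarrow> (nat \<Rightarrow> real) set" where
  "CC g1 g2 k x = {w. \<forall>j\<le>k. fw g1 g2 j w x \<noteq> 0}"

definition pp :: "real \<Rightarrow> real \<Rightarrow> int \<Rightarrow> real" where
  "pp g1 g2 x = g1 / (g1 + g2 * real_of_int x)"

lemma comp_sets: "A \<in> sets lborel \<Longrightarrow> {w. w j \<in> A} \<in> sets NN"
proof -
  assume A: "A \<in> sets lborel"
  have m1: "(\<lambda>w. w j) \<in> measurable NN lborel"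
    unfolding NN_def by (simp add: measurable_component_singleton cong: measurable_cong_sets)
  have "{w. w j \<in> A} = (\<lambda>w. w j) -` A \<inter> space NN" by auto
  then show ?thesis using measurable_sets[OF m1 A] by simp
qed

lemma stp_eq: "stp g1 g2 t z = y \<longleftrightarrow> (z = y - 1 \<and> t < pp g1 g2 z) \<or> (z = y + 1 \<and> \<not> t < pp g1 g2 z)"
  by (auto simp: stp_def pp_def)

lemma fw_level_sets: "{w. fw g1 g2 j w x = y} \<in> sets NN"
proof (induction j arbitrary: y)
  case 0
  show ?case by (cases "x = y") (auto, metis sets.top space_NN)
next
  case (Suc j)
  have "{w. fw g1 g2 (Suc j) w x = y} =
     ({w. fw g1 g2 j w x = y - 1} \<inter> {w. w j \<in> {..< pp g1 g2 (y - 1)}}) \<union>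
     ({w. fw g1 g2 j w x = y + 1} \<inter> {w. w j \<in> {pp g1 g2 (y + 1)..}})"
    by (auto simp: stp_eq)
  also have "\<dots> \<in> sets NN"
    using Suc by (intro sets.Un sets.Int comp_sets) auto
  finally show ?case .
qed

lemma CC_sets: "CC g1 g2 k x \<in> sets NN"
proof -
  have "CC g1 g2 k x = (\<Inter>j\<in>{..k}. UNIV - {w. fw g1 g2 j w x = 0})"
    by (auto simp: CC_def)
  also have "\<dots> \<in> sets NN"
    using fw_level_sets by (intro sets.finite_INT) (auto intro!: sets.compl_sets[of _ NN, simplified])
  finally show ?thesis .
qed

lemma NN_split_measure:
  assumes A: "A \<in> sets lborel" and B: "B \<in> sets NN"
  shows "measure NN {w. w 0 \<in> A \<and> (\<lambda>n. w (Suc n)) \<in> B} = measure UU A * measure NN B"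
  using NN_split[OF assms] by (simp add: measure_def enn2real_mult)

lemma UU_lt: assumes "0 \<le> p" "p \<le> 1" shows "measure UU {..<p} = p"
proof -
  have "{0..1} \<inter> {..<p} = {0..<p}" using assms by auto
  then have "emeasure UU {..<p} = ennreal p"
    using assms by (simp add: divide_ennreal_def)
  then show ?thesis using assms by (simp add: measure_def)
qed

lemma UU_ge: assumes "0 \<le> p" "p \<le> 1" shows "measure UU {p..} = 1 - p"
proof -
  have "{0..1} \<inter> {p..} = {p..1}" using assms by auto
  then have "emeasure UU {p..} = ennreal (1 - p)"
    using assms by (simp add: divide_ennreal_def)
  then show ?thesis using assms by (simp add: measure_def)
qed

lemma all_le_Suc: "(\<forall>j\<le>Suc k. P j) \<longleftrightarrow> P 0 \<and> (\<forall>i\<le>k. P (Suc i))"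
  by (metis Suc_le_mono le0 not0_implies_Suc)

lemma split_sets:
  assumes A: "A \<in> sets lborel" and B: "B \<in> sets NN"
  shows "{w. w 0 \<in> A \<and> (\<lambda>n. w (Suc n)) \<in> B} \<in> sets NN"
proof -
  have m2: "(\<lambda>w. (\<lambda>n. w (Suc n))) \<in> measurable NN NN"
    unfolding NN_def
    by (rule measurable_PiM_single'[where f="\<lambda>n w. w (Suc n)"]) (auto simp: space_PiM)
  have "{w. w 0 \<in> A \<and> (\<lambda>n. w (Suc n)) \<in> B} = {w. w 0 \<in> A} \<inter> ((\<lambda>w. (\<lambda>n. w (Suc n))) -` B \<inter> space NN)"
    by auto
  also have "\<dots> \<in> sets NN" using m2 A B comp_sets by (intro sets.Int measurable_sets) auto
  finally show ?thesis .
qed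

lemma CC_rec:
  assumes g: "g1 > 0" "g2 > 0" and x: "x \<ge> 1"
  shows "measure NN (CC g1 g2 (Suc k) x) =
     pp g1 g2 x * measure NN (CC g1 g2 k (x + 1)) + (1 - pp g1 g2 x) * measure NN (CC g1 g2 k (x - 1))"
proof -
  interpret PN: prob_space NN by (rule probNN)
  let ?p = "pp g1 g2 x"
  have p: "0 \<le> ?p" "?p \<le> 1" using g x by (auto simp: pp_def divide_le_eq_1)
  let ?A = "{w. w 0 \<in> {..<?p} \<and> (\<lambda>n. w (Suc n)) \<in> CC g1 g2 k (x + 1)}"
  let ?B = "{w. w 0 \<in> {?p..} \<and> (\<lambda>n. w (Suc n)) \<in> CC g1 g2 k (x - 1)}"
  have "CC g1 g2 (Suc k) x = ?A \<union> ?B"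
    using x unfolding CC_def all_le_Suc
    by (auto simp: fw_Suc_left[where k="_ :: nat"] stp_def pp_def simp del: fw.simps(2))
  moreover have "measure NN (?A \<union> ?B) = measure NN ?A + measure NN ?B"
    by (intro PN.finite_measure_Union split_sets CC_sets) auto
  moreover have "measure NN ?A = ?p * measure NN (CC g1 g2 k (x + 1))"
    using NN_split_measure[of "{..<?p}" "CC g1 g2 k (x + 1)"] UU_lt[OF p] CC_sets by simp
  moreover have "measure NN ?B = (1 - ?p) * measure NN (CC g1 g2 k (x - 1))"
    using NN_split_measure[of "{?p..}" "CC g1 g2 k (x - 1)"] UU_ge[OF p] CC_sets by simp
  ultimately show ?thesis by simp
qed


lemma pp_small:
  assumes g: "g1 > 0" "g2 > 0" and x: "real_of_int x \<ge> 3 * g1 / g2"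
  shows "pp g1 g2 x \<le> 1/4"
proof -
  have "3 * g1 \<le> g2 * real_of_int x" using x g by (simp add: divide_le_eq mult.commute)
  then show ?thesis using g by (simp add: pp_def divide_le_eq)
qed

lemma pp_bounds:
  assumes g: "g1 > 0" "g2 > 0" and x: "x \<ge> 1"
  shows "0 < pp g1 g2 x" "pp g1 g2 x < 1"
proof -
  have "g2 * real_of_int x > 0" using g x by simp
  then show "0 < pp g1 g2 x" "pp g1 g2 x < 1" using g by (auto simp: pp_def divide_less_eq)
qed

definition drift_ok :: "real \<Rightarrow> real \<Rightarrow> (int \<Rightarrow> real) \<Rightarrow> int \<Rightarrow> bool" where
  "drift_ok g1 g2 d x \<longleftrightarrow> d x \<ge> 0 \<and> pp g1 g2 x * d (x + 1) \<le> (1 - pp g1 g2 x) * d x - 1"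

lemma drift_exists:
  assumes g: "g1 > 0" "g2 > 0"
  shows "\<exists>d. \<forall>x\<ge>1. drift_ok g1 g2 d x"
proof -
  define K :: int where "K = \<lceil>3 * g1 / g2\<rceil>"
  have big: "pp g1 g2 x \<le> 1/4" if "x \<ge> K" for x
    using that g by (intro pp_small) (auto simp: K_def ceiling_le_iff)
  have "\<exists>d. \<forall>x. x \<ge> K - int m \<longrightarrow> x \<ge> 1 \<longrightarrow> drift_ok g1 g2 d x" for m
  proof (induction m)
    case 0
    show ?case
      by (rule exI[of _ "\<lambda>_. 2"]) (auto simp: drift_ok_def dest!: big)
  next
    case (Suc m)
    then obtain d where d: "\<And>x. x \<ge> K - int m \<Longrightarrow> x \<ge> 1 \<Longrightarrow> drift_ok g1 g2 d x" by blast
    define x0 where "x0 = K - int m - 1"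
    define d' where "d' = d(x0 := (1 + pp g1 g2 x0 * d (x0 + 1)) / (1 - pp g1 g2 x0))"
    show ?case
    proof (rule exI[of _ d'], intro allI impI)
      fix x assume x: "K - int (Suc m) \<le> x" "1 \<le> x"
      show "drift_ok g1 g2 d' x"
      proof (cases "x = x0")
        case True
        have "d (x0 + 1) \<ge> 0" using d[of "x0 + 1"] x True by (auto simp: x0_def drift_ok_def)
        moreover have pb: "0 < pp g1 g2 x0" "pp g1 g2 x0 < 1" using pp_bounds[OF g] x True by auto
        ultimately show ?thesis using True
          by (auto simp: drift_ok_def d'_def)
      next
        case False
        then have "x \<ge> K - int m" using x by (auto simp: x0_def)
        then show ?thesis using d[of x] x False by (auto simp: drift_ok_def d'_def x0_def)
      qed
    qed
  qed
  from this[of "nat (K + 1)"] obtain d where "\<And>x. x \<ge> K - int (nat (K + 1)) \<Longrightarrow> x \<ge> 1 \<Longrightarrow> drift_ok g1 g2 d x"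
    by blast
  then show ?thesis by (intro exI[of _ d]) auto
qed

lemma sum_Icc_int_Suc: "(x::int) \<ge> 0 \<Longrightarrow> (\<Sum>i\<in>{1..x + 1}. d i) = (\<Sum>i\<in>{1..x}. d i) + (d (x + 1) :: real)"
proof -
  assume "x \<ge> 0"
  then have "{1..x + 1} = insert (x + 1) {1..x}" by auto
  then show ?thesis by simp
qed

lemma CC_zero: "CC g1 g2 j 0 = {}"
  by (auto simp: CC_def intro: exI[of _ 0])

lemma CC_bound:
  assumes g: "g1 > 0" "g2 > 0" and d: "\<And>x. x \<ge> 1 \<Longrightarrow> drift_ok g1 g2 d x"
  shows "x \<ge> 0 \<Longrightarrow> (\<Sum>j<k. measure NN (CC g1 g2 j x)) \<le> (\<Sum>i\<in>{1..x}. d i)"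
proof (induction k arbitrary: x)
  case 0
  have "\<forall>i\<in>{1..x}. d i \<ge> 0" using d by (auto simp: drift_ok_def)
  then show ?case using sum_nonneg by (simp add: sum_nonneg) (metis (no_types, lifting) sum_nonneg)
next
  case (Suc k)
  interpret PN: prob_space NN by (rule probNN)
  show ?case
  proof (cases "x = 0")
    case True
    then show ?thesis by (simp add: CC_zero)
  next
    case False
    then have x: "x \<ge> 1" using Suc by simp
    let ?p = "pp g1 g2 x"
    let ?S = "\<lambda>y. (\<Sum>j<k. measure NN (CC g1 g2 j y))"
    let ?V = "\<lambda>y. (\<Sum>i\<in>{1..y}. d i)"
    have p: "0 < ?p" "?p < 1" using pp_bounds[OF g x] by auto
    have c0: "measure NN (CC g1 g2 0 x) = 1"
    proof -
      have "CC g1 g2 0 x = space NN" using x by (auto simp: CC_def)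
      then show ?thesis using PN.prob_space by simp
    qed
    have "(\<Sum>j<Suc k. measure NN (CC g1 g2 j x)) = 1 + (\<Sum>j<k. measure NN (CC g1 g2 (Suc j) x))"
      by (subst sum.lessThan_Suc_shift) (simp add: c0)
    also have "\<dots> = 1 + ?p * ?S (x + 1) + (1 - ?p) * ?S (x - 1)"
      by (simp add: CC_rec[OF g x] sum.distrib sum_distrib_left)
    also have "\<dots> \<le> 1 + ?p * ?V (x + 1) + (1 - ?p) * ?V (x - 1)"
      using Suc.IH[of "x + 1"] Suc.IH[of "x - 1"] x p
      by (intro add_mono mult_left_mono order.refl) auto
    also have "?V (x + 1) = ?V x + d (x + 1)" using x by (simp add: sum_Icc_int_Suc)
    also have "?V x = ?V (x - 1) + d x" using sum_Icc_int_Suc[of "x - 1" d] x by simp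
    finally show ?thesis using d[OF x] sum_Icc_int_Suc[of "x - 1" d] x by (simp add: drift_ok_def algebra_simps)
  qed
qed


definition AA :: "real \<Rightarrow> real \<Rightarrow> int \<Rightarrow> nat \<Rightarrow> noise set" where
  "AA g1 g2 x n = {q. \<forall>j\<le>2*n. fw g1 g2 j (\<lambda>i. q (int i - 2 * int n)) x \<noteq> 0}"

lemma prob_noiseP: "prob_space noiseP"
  unfolding noiseP_def by (rule prob_space_PiM) (rule probU)

lemma space_noiseP[simp]: "space noiseP = UNIV"
  by (auto simp: noiseP_def space_PiM)

lemma gmap_meas: "(\<lambda>q. \<lambda>i. q (int i - c)) \<in> measurable noiseP NN"
  unfolding NN_def noiseP_def
  by (rule measurable_PiM_single'[where f="\<lambda>i q. q (int i - c)"])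
     (auto simp: space_PiM intro: measurable_component_singleton)

lemma gmap_distr: "distr noiseP NN (\<lambda>q. \<lambda>i. q (int i - c)) = NN"
proof -
  have "distr (PiM (UNIV::int set) (\<lambda>_. UU)) (PiM (UNIV::nat set) (\<lambda>i. (\<lambda>_. UU) ((\<lambda>i. int i - c) i)))
     (\<lambda>\<omega>. \<lambda>n\<in>UNIV. \<omega> ((\<lambda>i. int i - c) n)) = PiM (UNIV::nat set) (\<lambda>i. (\<lambda>_. UU) ((\<lambda>i. int i - c) i))"
    by (rule distr_PiM_reindex) (auto simp: probU inj_on_def)
  moreover have "(\<lambda>\<omega>. \<lambda>n\<in>(UNIV::nat set). \<omega> (int n - c)) = (\<lambda>q i. q (int i - c))"
    by (auto simp: fun_eq_iff)
  ultimately show ?thesis unfolding noiseP_def NN_def by (simp add: restrict_UNIV)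
qed

lemma AA_eq: "AA g1 g2 x n = (\<lambda>q. \<lambda>i. q (int i - 2 * int n)) -` CC g1 g2 (2*n) x \<inter> space noiseP"
  by (auto simp: AA_def CC_def)

lemma AA_sets: "AA g1 g2 x n \<in> sets noiseP"
  unfolding AA_eq by (rule measurable_sets[OF gmap_meas CC_sets])

lemma AA_measure: "measure noiseP (AA g1 g2 x n) = measure NN (CC g1 g2 (2*n) x)"
proof -
  have "emeasure noiseP (AA g1 g2 x n) = emeasure (distr noiseP NN (\<lambda>q. \<lambda>i. q (int i - 2 * int n))) (CC g1 g2 (2*n) x)"
    unfolding AA_eq by (rule emeasure_distr[symmetric, OF gmap_meas CC_sets])
  then show ?thesis by (simp add: gmap_distr measure_def)
qed

lemma sum_even_le:
  fixes f :: "nat \<Rightarrow> real"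
  assumes "\<And>n. f n \<ge> 0"
  shows "(\<Sum>n<M. f (2*n)) \<le> (\<Sum>j<2*M. f j)"
proof (induction M)
  case (Suc M)
  have "(\<Sum>j<2*Suc M. f j) = (\<Sum>j<2*M. f j) + f (2*M) + f (2*M+1)"
    by (simp add: numeral_2_eq_2)
  then show ?case using Suc assms[of "2*M+1"] by simp
qed simp

lemma AE_hit:
  assumes g: "g1 > 0" "g2 > 0" and x: "x \<ge> 0"
  shows "AE q in noiseP. eventually (\<lambda>n. \<exists>j\<le>2*n. fw g1 g2 j (\<lambda>i. q (int i - 2 * int n)) x = 0) sequentially"
proof -
  interpret P: prob_space noiseP by (rule prob_noiseP)
  interpret PN: prob_space NN by (rule probNN)
  obtain d where d: "\<And>x. x \<ge> 1 \<Longrightarrow> drift_ok g1 g2 d x" using drift_exists[OF g] by blast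
  have "summable (\<lambda>n. measure noiseP (AA g1 g2 x n))"
  proof (rule summableI_nonneg_bounded)
    fix M
    have "(\<Sum>n<M. measure noiseP (AA g1 g2 x n)) = (\<Sum>n<M. measure NN (CC g1 g2 (2*n) x))"
      by (simp add: AA_measure)
    also have "\<dots> \<le> (\<Sum>j<2*M. measure NN (CC g1 g2 j x))"
      by (rule sum_even_le[where f="\<lambda>j. measure NN (CC g1 g2 j x)"]) simp
    also have "\<dots> \<le> (\<Sum>i\<in>{1..x}. d i)" by (rule CC_bound[OF g d x])
    finally show "(\<Sum>n<M. measure noiseP (AA g1 g2 x n)) \<le> (\<Sum>i\<in>{1..x}. d i)" .
  qed simp
  then have "AE q in noiseP. eventually (\<lambda>n. q \<in> space noiseP - AA g1 g2 x n) sequentially"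
    by (intro borel_cantelli_AE1 AA_sets) (auto simp: P.emeasure_eq_measure)
  then show ?thesis
    by (rule AE_mp) (auto simp: AA_def elim: eventually_mono)
qed

lemma AE_lt1: "AE q in noiseP. \<forall>n. q n < 1"
proof -
  have U: "AE x in UU. x < 1"
    by (rule AE_uniform_measureI) (auto intro: AE_mp[OF AE_lborel_singleton[of 1]])
  show ?thesis
    unfolding AE_all_countable noiseP_def
    by (intro allI AE_PiM_component[where M="\<lambda>_. UU"] probU U) auto
qed


lemma pullback_fw: "pullback g1 g2 x q n = fw g1 g2 (2*n) (\<lambda>i. q (int i - 2 * int n)) (int x)"
  by (simp add: pullback_def phi_fw)

lemma det_main:
  fixes q :: noise and b z :: int
  assumes g: "g1 > 0" "g2 > 0" and q: "\<And>n. q n < 1" and b: "b = 0 \<or> b = 1"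
    and z: "b \<le> z" "even (z - b)"
    and hit: "\<And>n. n \<ge> N \<Longrightarrow> (\<exists>j\<le>2*n. fw g1 g2 j (\<lambda>i. q (int i - 2 * int n)) z = 0)
                                \<and> (\<exists>j\<le>2*n. fw g1 g2 j (\<lambda>i. q (int i - 2 * int n)) (b + 2) = 0)"
  shows "\<forall>n\<ge>N. fw g1 g2 (2*n) (\<lambda>i. q (int i - 2 * int n)) z = fw g1 g2 (2*N) (\<lambda>i. q (int i - 2 * int N)) b
           \<and> fw g1 g2 (2*n) (\<lambda>i. q (int i - 2 * int n)) b = fw g1 g2 (2*N) (\<lambda>i. q (int i - 2 * int N)) b"
proof -
  define w where "w n = (\<lambda>i. q (int i - 2 * int n))" for n
  define Pb where "Pb y n = fw g1 g2 (2*n) (w n) y" for y n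
  have wl: "\<And>n i. w n i < 1" using q by (simp add: w_def)
  have b0: "0 \<le> b" using b by auto
  have e1: "Pb z n = Pb b n" if nN: "n \<ge> N" for n
  proof -
    obtain j where "j \<le> 2*n" "fw g1 g2 j (w n) z = 0" using hit[OF nN] by (auto simp: w_def)
    then show ?thesis unfolding Pb_def
      by (intro fw_hit[OF g _ b0 z]) (auto simp: wl)
  qed
  have e2: "Pb (b + 2) n = Pb b n" if nN: "n \<ge> N" for n
  proof -
    obtain j where "j \<le> 2*n" "fw g1 g2 j (w n) (b + 2) = 0" using hit[OF nN] by (auto simp: w_def)
    then show ?thesis unfolding Pb_def
      by (intro fw_hit[OF g _ b0]) (auto simp: wl)
  qed
  have e3: "Pb b (Suc n) = Pb b n" if "n \<ge> N" for n
  proof -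
    have "Pb b (Suc n) = fw g1 g2 (2 + 2*n) (w (Suc n)) b" by (simp add: Pb_def)
    also have "\<dots> = fw g1 g2 (2*n) (\<lambda>i. w (Suc n) (i + 2)) (fw g1 g2 2 (w (Suc n)) b)"
      by (rule fw_add)
    also have "(\<lambda>i. w (Suc n) (i + 2)) = w n" by (auto simp: w_def fun_eq_iff algebra_simps)
    finally have "Pb b (Suc n) = fw g1 g2 (2*n) (w n) (fw g1 g2 2 (w (Suc n)) b)" .
    moreover have "fw g1 g2 2 (w (Suc n)) b = b \<or> fw g1 g2 2 (w (Suc n)) b = b + 2"
      by (rule fw_two[OF g _ b]) (simp add: wl)
    ultimately show ?thesis
    proof (elim disjE)
      assume "Pb b (Suc n) = fw g1 g2 (2*n) (w n) (fw g1 g2 2 (w (Suc n)) b)" "fw g1 g2 2 (w (Suc n)) b = b"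
      then show ?thesis unfolding Pb_def by simp
    next
      assume "Pb b (Suc n) = fw g1 g2 (2*n) (w n) (fw g1 g2 2 (w (Suc n)) b)" "fw g1 g2 2 (w (Suc n)) b = b + 2"
      then have "Pb b (Suc n) = Pb (b + 2) n" unfolding Pb_def by simp
      then show ?thesis using e2[OF that] by simp
    qed
  qed
  have e4: "Pb b n = Pb b N" if "n \<ge> N" for n
    using that
  proof (induction n rule: dec_induct)
    case (step n) then show ?case using e3 by simp
  qed simp
  show ?thesis
  proof (intro allI impI)
    fix n assume nN: "n \<ge> N"
    have "Pb z n = Pb b N \<and> Pb b n = Pb b N" using e1[OF nN] e4[OF nN] by simp
    then show "fw g1 g2 (2*n) (\<lambda>i. q (int i - 2 * int n)) z = fw g1 g2 (2*N) (\<lambda>i. q (int i - 2 * int N)) b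
           \<and> fw g1 g2 (2*n) (\<lambda>i. q (int i - 2 * int n)) b = fw g1 g2 (2*N) (\<lambda>i. q (int i - 2 * int N)) b"
      unfolding Pb_def w_def .
  qed
qed

lemma evconst: "(\<And>n. n \<ge> N \<Longrightarrow> f n = c) \<Longrightarrow> convergent f \<and> lim f = c"
proof -
  assume h: "\<And>n. n \<ge> N \<Longrightarrow> f n = c"
  have "f \<longlonglongrightarrow> c"
    by (rule tendsto_eventually) (auto simp: eventually_sequentially intro: h)
  then show ?thesis by (auto simp: convergent_def limI)
qed

lemma key:
  assumes g: "g1 > 0" "g2 > 0"
  shows "AE q in noiseP. \<exists>N. \<forall>n\<ge>N. pullback g1 g2 x q n = pullback g1 g2 (x mod 2) q N
            \<and> pullback g1 g2 (x mod 2) q n = pullback g1 g2 (x mod 2) q N"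
proof -
  let ?b = "int (x mod 2)"
  have h1: "AE q in noiseP. eventually (\<lambda>n. \<exists>j\<le>2*n. fw g1 g2 j (\<lambda>i. q (int i - 2 * int n)) (int x) = 0) sequentially"
    by (rule AE_hit[OF g]) simp
  have h2: "AE q in noiseP. eventually (\<lambda>n. \<exists>j\<le>2*n. fw g1 g2 j (\<lambda>i. q (int i - 2 * int n)) (?b + 2) = 0) sequentially"
    by (rule AE_hit[OF g]) simp
  show ?thesis
    using h1 h2 AE_lt1
  proof eventually_elim
    case (elim q)
    then have "eventually (\<lambda>n. (\<exists>j\<le>2*n. fw g1 g2 j (\<lambda>i. q (int i - 2 * int n)) (int x) = 0)
       \<and> (\<exists>j\<le>2*n. fw g1 g2 j (\<lambda>i. q (int i - 2 * int n)) (?b + 2) = 0)) sequentially"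
      by (auto intro: eventually_conj)
    then obtain N where N: "\<And>n. n \<ge> N \<Longrightarrow> (\<exists>j\<le>2*n. fw g1 g2 j (\<lambda>i. q (int i - 2 * int n)) (int x) = 0)
       \<and> (\<exists>j\<le>2*n. fw g1 g2 j (\<lambda>i. q (int i - 2 * int n)) (?b + 2) = 0)"
      by (auto simp: eventually_sequentially)
    have b: "?b = 0 \<or> ?b = 1" by auto
    have z1: "?b \<le> int x" by simp
    have z2: "even (int x - ?b)" by presburger
    have "\<forall>n\<ge>N. fw g1 g2 (2*n) (\<lambda>i. q (int i - 2 * int n)) (int x) = fw g1 g2 (2*N) (\<lambda>i. q (int i - 2 * int N)) ?b
           \<and> fw g1 g2 (2*n) (\<lambda>i. q (int i - 2 * int n)) ?b = fw g1 g2 (2*N) (\<lambda>i. q (int i - 2 * int N)) ?b"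
      by (rule det_main[OF g _ b z1 z2 N]) (use elim(3) in blast)
    then show ?case by (auto simp: pullback_fw)
  qed
qed

lemma pullback_parity: "pullback g1 g2 x q n mod 2 = int x mod 2"
  unfolding pullback_fw fw_parity by presburger

theorem corollary4p9:
  fixes g1 g2 :: real
  assumes "g1 > 0" and "g2 > 0"
  shows "(\<forall>x::nat. AE q in noiseP. convergent (pullback g1 g2 x q))
    \<and> (\<forall>x y::nat. even x = even y \<longrightarrow> (AE q in noiseP. a_lim g1 g2 x q = a_lim g1 g2 y q))
    \<and> (\<forall>x y::nat. even x \<and> odd y \<longrightarrow> (AE q in noiseP. a_lim g1 g2 x q \<noteq> a_lim g1 g2 y q))"
proof (intro conjI allI impI)
  fix x :: nat
  show "AE q in noiseP. convergent (pullback g1 g2 x q)"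
    using key[OF assms, of x]
  proof eventually_elim
    case (elim q)
    then obtain N where "\<forall>n\<ge>N. pullback g1 g2 x q n = pullback g1 g2 (x mod 2) q N" by blast
    then show ?case using evconst[of N "pullback g1 g2 x q" "pullback g1 g2 (x mod 2) q N"] by blast
  qed
next
  fix x y :: nat
  assume p: "even x = even y"
  then have xy: "x mod 2 = y mod 2"
    by (cases "even x") (auto simp: even_iff_mod_2_eq_zero odd_iff_mod_2_eq_one)
  show "AE q in noiseP. a_lim g1 g2 x q = a_lim g1 g2 y q"
    using key[OF assms, of x] key[OF assms, of y]
  proof eventually_elim
    case (elim q)
    then obtain N1 N2 where
      n1: "\<forall>n\<ge>N1. pullback g1 g2 x q n = pullback g1 g2 (x mod 2) q N1 \<and> pullback g1 g2 (x mod 2) q n = pullback g1 g2 (x mod 2) q N1" and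
      n2: "\<forall>n\<ge>N2. pullback g1 g2 y q n = pullback g1 g2 (y mod 2) q N2 \<and> pullback g1 g2 (y mod 2) q n = pullback g1 g2 (y mod 2) q N2"
      by blast
    have ax: "a_lim g1 g2 x q = pullback g1 g2 (x mod 2) q N1"
      using evconst[of N1 "pullback g1 g2 x q" "pullback g1 g2 (x mod 2) q N1"] n1 unfolding a_lim_def by blast
    have ay: "a_lim g1 g2 y q = pullback g1 g2 (y mod 2) q N2"
      using evconst[of N2 "pullback g1 g2 y q" "pullback g1 g2 (y mod 2) q N2"] n2 unfolding a_lim_def by blast
    have m1: "pullback g1 g2 (x mod 2) q (max N1 N2) = pullback g1 g2 (x mod 2) q N1"
      using n1 max.cobounded1 by blast
    have m2: "pullback g1 g2 (y mod 2) q (max N1 N2) = pullback g1 g2 (y mod 2) q N2"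
      using n2 max.cobounded2 by blast
    show ?case using ax ay m1 m2 xy by metis
  qed
next
  fix x y :: nat
  assume p: "even x \<and> odd y"
  show "AE q in noiseP. a_lim g1 g2 x q \<noteq> a_lim g1 g2 y q"
    using key[OF assms, of x] key[OF assms, of y]
  proof eventually_elim
    case (elim q)
    then obtain N1 N2 where
      n1: "\<forall>n\<ge>N1. pullback g1 g2 x q n = pullback g1 g2 (x mod 2) q N1 \<and> pullback g1 g2 (x mod 2) q n = pullback g1 g2 (x mod 2) q N1" and
      n2: "\<forall>n\<ge>N2. pullback g1 g2 y q n = pullback g1 g2 (y mod 2) q N2 \<and> pullback g1 g2 (y mod 2) q n = pullback g1 g2 (y mod 2) q N2"
      by blast
    have ax: "a_lim g1 g2 x q = pullback g1 g2 x q N1"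
      using evconst[of N1 "pullback g1 g2 x q" "pullback g1 g2 x q N1"] n1 unfolding a_lim_def by (metis order.refl)
    have ay: "a_lim g1 g2 y q = pullback g1 g2 y q N2"
      using evconst[of N2 "pullback g1 g2 y q" "pullback g1 g2 y q N2"] n2 unfolding a_lim_def by (metis order.refl)
    have "a_lim g1 g2 x q mod 2 = int x mod 2" "a_lim g1 g2 y q mod 2 = int y mod 2"
      using ax ay pullback_parity by metis+
    moreover have "int x mod 2 \<noteq> int y mod 2"
    proof -
      have "x mod 2 = 0" "y mod 2 = 1" using p by (auto simp: even_iff_mod_2_eq_zero odd_iff_mod_2_eq_one)
      then show ?thesis using zmod_int[of x 2] zmod_int[of y 2] by simp
    qed
    ultimately show ?case by auto
  qed
qed

end
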